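(* Suppose Assumption A2 holds. Then for any $\boldsymbol{\alpha}\in\mathcal{A}$, $\Phi(\cdot\,;\boldsymbol{\alpha})$ is $\mu_\Phi$-strongly concave on $\mathcal{X}$, where $\mu_\Phi:=\frac{\epsilon+\mu M_{\min}}{2}$ and $M_{\min}=\min_{r=1,\dots,n} M_r$, with $M_r$ the number of links that user $r$ exclusively occupies (links in $\mathcal{L}_r$ used by no other user).
   Context: Network: $n$ users, a finite set of links $\mathcal{L}$; user $r$ uses the set of links $\mathcal{L}_r\subseteq\mathcal{L}$. For each user $r$, a true utility $\widetilde U_r:\mathbb{R}_{>0}\to\mathbb{R}$ and a surrogate utility $U_r(x;\alpha_r)$ ($x>0$, $\alpha_r\in\mathbb{R}$), twice continuously differentiable. Each link $l$ has a twice continuously differentiable $B_l:\mathbb{R}\to\mathbb{R}$. Fix $\epsilon>0$; $\mathcal{A}=\mathcal{A}_1\times\dots\times\mathcal{A}_n$, each $\mathcal{A}_r\subset\mathbb{R}$ closed, convex, bounded. Define $\Phi(\mathbf{x};\boldsymbol{\alpha}) = \sum_{r=1}^n (U_r(x_r;\alpha_r) -\frac{\epsilon x_r^2}{2})-\sum_{l\in\mathcal{L}}B_l(\sum_{i:l\in\mathcal{L}_i}x_i)$. Given constants $0<\delta<b$, let $\mathcal{X}=\{\mathbf{x}:\delta/2<x_r<2b,\ r=1,\dots,n\}$. Assumption A2: for all $\boldsymbol{\alpha}\in\mathcal{A}$, $\mathbf{x}\in\mathcal{X}$: $U_r(\cdot;\alpha_r)$ is concave and each $B_l$ is $\mu$-strongly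 convex; $\widetilde U_r$, $\nabla\widetilde U_r$, $\nabla_xU_r$, $\nabla_\alpha\nabla_xU_r$, $\nabla_x^2U_r$ are $L_u$-Lipschitz; $\nabla B_l$ and $\nabla^2 B_l$ are $L_b$-Lipschitz. *)

theory Defs
  imports "HOL-Analysis.Analysis"
begin

definition strongly_convex_on :: "'a::real_normed_vector set \<Rightarrow> real \<Rightarrow> ('a \<Rightarrow> real) \<Rightarrow> bool"
  where "strongly_convex_on S m f \<longleftrightarrow> convex S \<and>
    (\<forall>x\<in>S. \<forall>y\<in>S. \<forall>t\<in>{0..1}.
       f ((1 - t) *\<^sub>R x + t *\<^sub>R y) \<le> (1 - t) * f x + t * f y - m / 2 * t * (1 - t) * (norm (x - y))\<^sup>2)"

definition strongly_concave_on :: "'a::real_normed_vector set \<Rightarrow> real \<Rightarrow> ('a \<Rightarrow> real) \<Rightarrow> bool"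
  where "strongly_concave_on S m f \<longleftrightarrow> strongly_convex_on S m (\<lambda>x. - f x)"

definition C2_on :: "'a::euclidean_space set \<Rightarrow> ('a \<Rightarrow> real) \<Rightarrow> bool"
  where "C2_on S g \<longleftrightarrow> (\<exists>(g' :: 'a \<Rightarrow> ('a \<Rightarrow>\<^sub>L real)) (g'' :: 'a \<Rightarrow> ('a \<Rightarrow>\<^sub>L ('a \<Rightarrow>\<^sub>L real))).
      (\<forall>z\<in>S. (g has_derivative blinfun_apply (g' z)) (at z)) \<and>
      (\<forall>z\<in>S. (g' has_derivative blinfun_apply (g'' z)) (at z)) \<and>
      continuous_on S g'')"

text \<open>Users are indexed by the finite type 'n (n = CARD('n)); links have type 'l.
  U r x a = U_r(x; alpha_r); Lr r = the link set of user r.\<close>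

definition Phi :: "('n::finite \<Rightarrow> real \<Rightarrow> real \<Rightarrow> real) \<Rightarrow> ('l \<Rightarrow> real \<Rightarrow> real) \<Rightarrow> real
    \<Rightarrow> 'l set \<Rightarrow> ('n \<Rightarrow> 'l set) \<Rightarrow> real^'n \<Rightarrow> real^'n \<Rightarrow> real"
  where "Phi U B \<epsilon> L Lr x \<alpha> =
    (\<Sum>r\<in>UNIV. U r (x$r) (\<alpha>$r) - \<epsilon> * (x$r)\<^sup>2 / 2)
    - (\<Sum>l\<in>L. B l (\<Sum>i\<in>{i. l \<in> Lr i}. x$i))"

definition Xset :: "real \<Rightarrow> real \<Rightarrow> (real^'n::finite) set"
  where "Xset \<delta> b = {x. \<forall>r. \<delta> / 2 < x$r \<and> x$r < 2 * b}"

definition loads :: "('n::finite \<Rightarrow> 'l set) \<Rightarrow> real \<Rightarrow> real \<Rightarrow> 'l \<Rightarrow> real set"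
  where "loads Lr \<delta> b l = (\<lambda>x. \<Sum>i\<in>{i. l \<in> Lr i}. x$i) ` Xset \<delta> b"

definition Mexcl :: "('n \<Rightarrow> 'l set) \<Rightarrow> 'n \<Rightarrow> nat"
  where "Mexcl Lr r = card {l \<in> Lr r. \<forall>i. i \<noteq> r \<longrightarrow> l \<notin> Lr i}"

definition Mmin :: "('n::finite \<Rightarrow> 'l set) \<Rightarrow> nat"
  where "Mmin Lr = Min (range (Mexcl Lr))"

definition Ux :: "('n \<Rightarrow> real \<Rightarrow> real \<Rightarrow> real) \<Rightarrow> 'n \<Rightarrow> real \<Rightarrow> real \<Rightarrow> real"
  where "Ux U r x a = deriv (\<lambda>y. U r y a) x"

definition Uxx :: "('n \<Rightarrow> real \<Rightarrow> real \<Rightarrow> real) \<Rightarrow> 'n \<Rightarrow> real \<Rightarrow> real \<Rightarrow> real"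
  where "Uxx U r x a = deriv (\<lambda>y. Ux U r y a) x"

definition Uxa :: "('n \<Rightarrow> real \<Rightarrow> real \<Rightarrow> real) \<Rightarrow> 'n \<Rightarrow> real \<Rightarrow> real \<Rightarrow> real"
  where "Uxa U r x a = deriv (\<lambda>c. Ux U r x c) a"

end

theory Submission
  imports Defs
begin

theorem proposition2:
  fixes U :: "'n::finite \<Rightarrow> real \<Rightarrow> real \<Rightarrow> real"
    and Ut :: "'n \<Rightarrow> real \<Rightarrow> real"
    and B :: "'l \<Rightarrow> real \<Rightarrow> real"
    and L :: "'l set" and Lr :: "'n \<Rightarrow> 'l set"
    and A :: "'n \<Rightarrow> real set"
    and \<epsilon> \<delta> b \<mu> Lu Lb :: real
    and \<alpha> :: "real^'n"
  assumes finL: "finite L" and Lr_sub: "\<And>r. Lr r \<subseteq> L"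
    and eps: "\<epsilon> > 0" and delta: "0 < \<delta>" "\<delta> < b"
    and A_closed: "\<And>r. closed (A r)" and A_convex: "\<And>r. convex (A r)"
    and A_bounded: "\<And>r. bounded (A r)"
    and U_C2: "\<And>r. C2_on ({0<..} \<times> UNIV) (\<lambda>(x, a). U r x a)"
    and Ut_C2: "\<And>r. C2_on {0<..} (Ut r)"
    and B_C2: "\<And>l. C2_on UNIV (B l)"
    and mu: "\<mu> > 0"
    (* Assumption A2 *)
    and U_concave: "\<And>r a. a \<in> A r \<Longrightarrow> concave_on {\<delta>/2<..<2*b} (\<lambda>x. U r x a)"
    and B_strong: "\<And>l. l \<in> L \<Longrightarrow> strongly_convex_on (loads Lr \<delta> b l) \<mu> (B l)"
    and Ut_lip: "\<And>r. Lu-lipschitz_on {\<delta>/2<..<2*b} (Ut r)"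
    and dUt_lip: "\<And>r. Lu-lipschitz_on {\<delta>/2<..<2*b} (deriv (Ut r))"
    and Ux_lip: "\<And>r. Lu-lipschitz_on ({\<delta>/2<..<2*b} \<times> A r) (\<lambda>(x, a). Ux U r x a)"
    and Uxa_lip: "\<And>r. Lu-lipschitz_on ({\<delta>/2<..<2*b} \<times> A r) (\<lambda>(x, a). Uxa U r x a)"
    and Uxx_lip: "\<And>r. Lu-lipschitz_on ({\<delta>/2<..<2*b} \<times> A r) (\<lambda>(x, a). Uxx U r x a)"
    and dB_lip: "\<And>l. l \<in> L \<Longrightarrow> Lb-lipschitz_on (loads Lr \<delta> b l) (deriv (B l))"
    and ddB_lip: "\<And>l. l \<in> L \<Longrightarrow> Lb-lipschitz_on (loads Lr \<delta> b l) (deriv (deriv (B l)))"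
    and alpha: "\<And>r. \<alpha>$r \<in> A r"
  shows "strongly_concave_on (Xset \<delta> b) ((\<epsilon> + \<mu> * real (Mmin Lr)) / 2)
           (\<lambda>x. Phi U B \<epsilon> L Lr x \<alpha>)"
proof -
  define m where "m = (\<epsilon> + \<mu> * real (Mmin Lr)) / 2"
  define ld where "ld l x = (\<Sum>i\<in>{i. l \<in> Lr i}. (x::real^'n)$i)" for l x
  define Ex where "Ex r = {l \<in> Lr r. \<forall>i. i \<noteq> r \<longrightarrow> l \<notin> Lr i}" for r
  define I where "I = {\<delta>/2<..<2*b}"
  have cI: "convex I" unfolding I_def by (rule convex_real_interval)
  have XI: "x \<in> Xset \<delta> b \<longleftrightarrow> (\<forall>r. x$r \<in> I)" for x :: "real^'n"
    by (auto simp: Xset_def I_def)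
  have cX: "convex (Xset \<delta> b :: (real^'n) set)"
  proof (rule convexI)
    fix x y :: "real^'n" and u v :: real
    assume xy: "x \<in> Xset \<delta> b" "y \<in> Xset \<delta> b" and uv: "0 \<le> u" "0 \<le> v" "u + v = 1"
    have "u * x$r + v * y$r \<in> I" for r
      using convexD[OF cI, of "x$r" "y$r" u v] xy uv XI by auto
    then show "u *\<^sub>R x + v *\<^sub>R y \<in> Xset \<delta> b" unfolding XI by simp
  qed
  have ldlin: "ld l ((1 - t) *\<^sub>R x + t *\<^sub>R y) = (1 - t) * ld l x + t * ld l y" for l t x y
    unfolding ld_def by (simp add: sum.distrib sum_distrib_left)
  have ldX: "x \<in> Xset \<delta> b \<Longrightarrow> ld l x \<in> loads Lr \<delta> b l" for l x
    unfolding loads_def ld_def by auto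
  have finEx: "finite (Ex r)" for r
    by (rule finite_subset[OF _ finL]) (use Lr_sub in \<open>auto simp: Ex_def\<close>)
  have MminLe: "Mmin Lr \<le> Mexcl Lr r" for r
    unfolding Mmin_def by (rule Min_le) auto
  have MexEx: "Mexcl Lr r = card (Ex r)" for r
    unfolding Mexcl_def Ex_def by simp
  have ExL: "Ex r \<subseteq> L" for r using Lr_sub unfolding Ex_def by blast
  have ldEx: "l \<in> Ex r \<Longrightarrow> ld l x = x$r" for l r x
  proof -
    assume "l \<in> Ex r"
    then have "{i. l \<in> Lr i} = {r}" unfolding Ex_def by auto
    then show ?thesis unfolding ld_def by simp
  qed
  have ExU: "l \<in> Ex r \<Longrightarrow> l \<in> Ex r' \<Longrightarrow> r = r'" for l r r'
    unfolding Ex_def by auto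
  have main: "Phi U B \<epsilon> L Lr ((1 - t) *\<^sub>R x + t *\<^sub>R y) \<alpha> \<ge>
      (1 - t) * Phi U B \<epsilon> L Lr x \<alpha> + t * Phi U B \<epsilon> L Lr y \<alpha> + m / 2 * t * (1 - t) * (norm (x - y))\<^sup>2"
    if x: "x \<in> Xset \<delta> b" and y: "y \<in> Xset \<delta> b" and t: "t \<in> {0..1}" for x y t
  proof -
    define z where "z = (1 - t) *\<^sub>R x + t *\<^sub>R y"
    define D where "D = (\<Sum>r\<in>UNIV. (x$r - y$r)\<^sup>2)"
    define E where "E = (\<Sum>l\<in>L. (ld l x - ld l y)\<^sup>2)"
    have t0: "0 \<le> t" "t \<le> 1" using t by auto
    have nD: "(norm (x - y))\<^sup>2 = D"
      unfolding D_def norm_vec_def L2_set_def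
      by (simp add: sum_nonneg)
    have D0: "D \<ge> 0" unfolding D_def by (simp add: sum_nonneg)
    have zr: "z$r = (1 - t) * x$r + t * y$r" for r unfolding z_def by simp
    have a: "U r (z$r) (\<alpha>$r) \<ge> (1 - t) * U r (x$r) (\<alpha>$r) + t * U r (y$r) (\<alpha>$r)" for r
    proof -
      have "concave_on I (\<lambda>x. U r x (\<alpha>$r))" using U_concave[OF alpha] unfolding I_def .
      moreover have "x$r \<in> I" "y$r \<in> I" using x y XI by auto
      ultimately have "\<forall>u\<ge>0. \<forall>v\<ge>0. u + v = 1 \<longrightarrow> U r (u * x$r + v * y$r) (\<alpha>$r) \<ge> u * U r (x$r) (\<alpha>$r) + v * U r (y$r) (\<alpha>$r)"
        unfolding concave_on_iff by simp
      then have "U r ((1 - t) * x$r + t * y$r) (\<alpha>$r) \<ge> (1 - t) * U r (x$r) (\<alpha>$r) + t * U r (y$r) (\<alpha>$r)"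
        using t0 by simp
      then show ?thesis unfolding zr .
    qed
    have bq: "\<epsilon> * (z$r)\<^sup>2 / 2 = (1 - t) * (\<epsilon> * (x$r)\<^sup>2 / 2) + t * (\<epsilon> * (y$r)\<^sup>2 / 2)
        - \<epsilon> / 2 * t * (1 - t) * (x$r - y$r)\<^sup>2" for r
      unfolding zr by (simp add: power2_eq_square field_simps)
    have c: "B l (ld l z) \<le> (1 - t) * B l (ld l x) + t * B l (ld l y)
        - \<mu> / 2 * t * (1 - t) * (ld l x - ld l y)\<^sup>2" if "l \<in> L" for l
    proof -
      have "strongly_convex_on (loads Lr \<delta> b l) \<mu> (B l)" using B_strong[OF that] .
      then have "B l ((1 - t) *\<^sub>R ld l x + t *\<^sub>R ld l y) \<le> (1 - t) * B l (ld l x) + t * B l (ld l y)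
        - \<mu> / 2 * t * (1 - t) * (norm (ld l x - ld l y))\<^sup>2"
        unfolding strongly_convex_on_def using ldX[OF x] ldX[OF y] t by blast
      then show ?thesis unfolding z_def ldlin by simp
    qed
    have EM: "E \<ge> real (Mmin Lr) * D"
    proof -
      have pt: "(ld l x - ld l y)\<^sup>2 \<ge> (\<Sum>r\<in>UNIV. if l \<in> Ex r then (x$r - y$r)\<^sup>2 else 0)" for l
      proof (cases "\<exists>r. l \<in> Ex r")
        case True
        then obtain r0 where r0: "l \<in> Ex r0" by blast
        have "(\<Sum>r\<in>UNIV. if l \<in> Ex r then (x$r - y$r)\<^sup>2 else 0)
            = (\<Sum>r\<in>UNIV. if r = r0 then (x$r - y$r)\<^sup>2 else 0)"
          by (rule sum.cong) (use r0 ExU in auto)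
        also have "\<dots> = (x$r0 - y$r0)\<^sup>2" by simp
        finally show ?thesis using ldEx[OF r0] by simp
      next
        case False then show ?thesis by simp
      qed
      have "(\<Sum>l\<in>L. \<Sum>r\<in>UNIV. if l \<in> Ex r then (x$r - y$r)\<^sup>2 else 0) \<le> E"
        unfolding E_def by (rule sum_mono) (use pt in auto)
      moreover have "(\<Sum>l\<in>L. \<Sum>r\<in>UNIV. if l \<in> Ex r then (x$r - y$r)\<^sup>2 else 0)
          = (\<Sum>r\<in>UNIV. real (Mexcl Lr r) * (x$r - y$r)\<^sup>2)"
      proof -
        have "(\<Sum>l\<in>L. \<Sum>r\<in>UNIV. if l \<in> Ex r then (x$r - y$r)\<^sup>2 else 0)
           = (\<Sum>r\<in>UNIV. \<Sum>l\<in>L. if l \<in> Ex r then (x$r - y$r)\<^sup>2 else 0)"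
          by (rule sum.swap)
        also have "\<dots> = (\<Sum>r\<in>UNIV. real (Mexcl Lr r) * (x$r - y$r)\<^sup>2)"
        proof (rule sum.cong[OF refl])
          fix r
          have "(\<Sum>l\<in>L. if l \<in> Ex r then (x$r - y$r)\<^sup>2 else 0) = (\<Sum>l\<in>L \<inter> Ex r. (x$r - y$r)\<^sup>2)"
            using finL by (simp add: sum.inter_restrict[symmetric])
          also have "L \<inter> Ex r = Ex r" using ExL by blast
          finally show "(\<Sum>l\<in>L. if l \<in> Ex r then (x$r - y$r)\<^sup>2 else 0) = real (Mexcl Lr r) * (x$r - y$r)\<^sup>2"
            by (simp add: MexEx)
        qed
        finally show ?thesis .
      qed
      moreover have "real (Mmin Lr) * D \<le> (\<Sum>r\<in>UNIV. real (Mexcl Lr r) * (x$r - y$r)\<^sup>2)"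
        unfolding D_def sum_distrib_left
        by (rule sum_mono) (simp add: MminLe mult_right_mono)
      ultimately show ?thesis by linarith
    qed
    have sa: "(\<Sum>r\<in>UNIV. U r (z$r) (\<alpha>$r) - \<epsilon> * (z$r)\<^sup>2 / 2) \<ge>
        (1 - t) * (\<Sum>r\<in>UNIV. U r (x$r) (\<alpha>$r) - \<epsilon> * (x$r)\<^sup>2 / 2)
      + t * (\<Sum>r\<in>UNIV. U r (y$r) (\<alpha>$r) - \<epsilon> * (y$r)\<^sup>2 / 2) + \<epsilon> / 2 * t * (1 - t) * D"
    proof -
      have "(1 - t) * (\<Sum>r\<in>UNIV. U r (x$r) (\<alpha>$r) - \<epsilon> * (x$r)\<^sup>2 / 2)
        + t * (\<Sum>r\<in>UNIV. U r (y$r) (\<alpha>$r) - \<epsilon> * (y$r)\<^sup>2 / 2) + \<epsilon> / 2 * t * (1 - t) * D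
        = (\<Sum>r\<in>UNIV. (1 - t) * (U r (x$r) (\<alpha>$r) - \<epsilon> * (x$r)\<^sup>2 / 2)
            + t * (U r (y$r) (\<alpha>$r) - \<epsilon> * (y$r)\<^sup>2 / 2) + \<epsilon> / 2 * t * (1 - t) * (x$r - y$r)\<^sup>2)"
        unfolding D_def by (simp add: sum.distrib sum_distrib_left)
      also have "\<dots> \<le> (\<Sum>r\<in>UNIV. U r (z$r) (\<alpha>$r) - \<epsilon> * (z$r)\<^sup>2 / 2)"
      proof (rule sum_mono)
        fix r
        show "(1 - t) * (U r (x$r) (\<alpha>$r) - \<epsilon> * (x$r)\<^sup>2 / 2)
            + t * (U r (y$r) (\<alpha>$r) - \<epsilon> * (y$r)\<^sup>2 / 2) + \<epsilon> / 2 * t * (1 - t) * (x$r - y$r)\<^sup>2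
            \<le> U r (z$r) (\<alpha>$r) - \<epsilon> * (z$r)\<^sup>2 / 2"
          using a[of r] bq[of r] by (simp add: algebra_simps)
      qed
      finally show ?thesis .
    qed
    have sb: "(\<Sum>l\<in>L. B l (ld l z)) \<le> (1 - t) * (\<Sum>l\<in>L. B l (ld l x)) + t * (\<Sum>l\<in>L. B l (ld l y))
        - \<mu> / 2 * t * (1 - t) * E"
    proof -
      have "(\<Sum>l\<in>L. B l (ld l z)) \<le> (\<Sum>l\<in>L. (1 - t) * B l (ld l x) + t * B l (ld l y)
        - \<mu> / 2 * t * (1 - t) * (ld l x - ld l y)\<^sup>2)"
        by (rule sum_mono) (use c in auto)
      also have "\<dots> = (1 - t) * (\<Sum>l\<in>L. B l (ld l x)) + t * (\<Sum>l\<in>L. B l (ld l y))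
        - \<mu> / 2 * t * (1 - t) * E"
        unfolding E_def by (simp add: sum.distrib sum_subtractf sum_distrib_left)
      finally show ?thesis .
    qed
    have tt: "t * (1 - t) \<ge> 0" using t0 by simp
    have "m / 2 * t * (1 - t) * D \<le> \<epsilon> / 2 * t * (1 - t) * D + \<mu> / 2 * t * (1 - t) * E"
    proof -
      have "m / 2 * D \<le> \<epsilon> / 2 * D + \<mu> / 2 * E"
      proof -
        have "\<mu> * (real (Mmin Lr) * D) \<le> \<mu> * E" using EM mu by simp
        moreover have "0 \<le> \<mu> * (real (Mmin Lr) * D)" using mu D0 by simp
        moreover have "0 \<le> \<epsilon> * D" using eps D0 by simp
        ultimately show ?thesis unfolding m_def by (simp add: algebra_simps)
      qed
      from mult_left_mono[OF this tt] show ?thesis by (simp add: algebra_simps)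
    qed
    then show ?thesis
      using sa sb unfolding Phi_def z_def[symmetric] nD ld_def[symmetric] right_diff_distrib by linarith
  qed
  show ?thesis
    unfolding strongly_concave_on_def strongly_convex_on_def m_def[symmetric]
  proof (intro conjI ballI)
    show "convex (Xset \<delta> b :: (real^'n) set)" by (rule cX)
  next
    fix x y :: "real^'n" and t assume xy: "x \<in> Xset \<delta> b" "y \<in> Xset \<delta> b" and t: "t \<in> {0..1::real}"
    from main[OF xy t] show "- Phi U B \<epsilon> L Lr ((1 - t) *\<^sub>R x + t *\<^sub>R y) \<alpha>
        \<le> (1 - t) * - Phi U B \<epsilon> L Lr x \<alpha> + t * - Phi U B \<epsilon> L Lr y \<alpha> - m / 2 * t * (1 - t) * (norm (x - y))\<^sup>2"
      by linarith
  qed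
qed

end
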